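(* Let $s\in GL(\infty,F_2)$ be the permutation matrix exchanging the basis vectors $e_1$ and $e_2$ and fixing all $e_j$, $j\ge3$. For every $g\in GL(\infty,F_2)\setminus\{I\}$ there exist $k\in\mathbb N$ and $s_1,\dots,s_k\in GL(\infty,F_2)$ such that each $s_i$ is conjugate to $s$ in $GL(\infty,F_2)$, $s_1s_2\cdots s_k=g$, and $$R(s_1-I)+R(s_2-I)+\dots+R(s_k-I)=R(g-I),$$ where $R(h-I)\subseteq F_2^\infty$ denotes the range of $h-I$.
   Context: $F_2$ is the field with two elements and $F_2^\infty=\bigoplus_{\mathbb N}F_2$ is the space of finitely supported column vectors with standard basis $e_1,e_2,\dots$. $GL(\infty,F_2)$ is the group of invertible $\mathbb N\times\mathbb N$ matrices $M$ over $F_2$ with $M_{ij}\neq\delta_{ij}$ for only finitely many $(i,j)$, acting on $F_2^\infty$ by matrix multiplication; $I$ is the identity matrix. *)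

theory Defs
  imports Main "HOL-Library.Z2"
begin

text \<open>F_2 is the type bit (a field). Vectors are functions nat => bit, matrices nat => nat => bit.
  The basis vectors e_1, e_2, ... are indexed by 0, 1, ... (0-based).\<close>

type_synonym vec = "nat \<Rightarrow> bit"
type_synonym mat = "nat \<Rightarrow> nat \<Rightarrow> bit"

definition idm :: mat where
  "idm = (\<lambda>i j. if i = j then 1 else 0)"

definition finsupp :: "vec \<Rightarrow> bool" where
  "finsupp v \<longleftrightarrow> finite {i. v i \<noteq> 0}"

definition finitary :: "mat \<Rightarrow> bool" where
  "finitary M \<longleftrightarrow> finite {(i, j). M i j \<noteq> idm i j}"

text \<open>Matrix product; the sum ranges over the (finite, for finitary matrices) set of
  indices with nonzero summand.\<close>
definition mmult :: "mat \<Rightarrow> mat \<Rightarrow> mat" where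
  "mmult M N = (\<lambda>i j. \<Sum>k\<in>{k. M i k \<noteq> 0 \<and> N k j \<noteq> 0}. M i k * N k j)"

definition mvmult :: "mat \<Rightarrow> vec \<Rightarrow> vec" where
  "mvmult M v = (\<lambda>i. \<Sum>k\<in>{k. M i k \<noteq> 0 \<and> v k \<noteq> 0}. M i k * v k)"

definition msub :: "mat \<Rightarrow> mat \<Rightarrow> mat" where
  "msub M N = (\<lambda>i j. M i j - N i j)"

definition GLinf :: "mat set" where
  "GLinf = {M. finitary M \<and> (\<exists>N. finitary N \<and> mmult M N = idm \<and> mmult N M = idm)}"

definition conjugate_GL :: "mat \<Rightarrow> mat \<Rightarrow> bool" where
  "conjugate_GL A B \<longleftrightarrow> (\<exists>h N. h \<in> GLinf \<and> finitary N \<and> mmult h N = idm \<and> mmult N h = idm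
      \<and> A = mmult (mmult h B) N)"

definition rng :: "mat \<Rightarrow> vec set" where
  "rng M = {mvmult M v | v. finsupp v}"

fun ssum :: "vec set list \<Rightarrow> vec set" where
  "ssum [] = {(\<lambda>i. 0)}"
| "ssum (A # As) = {(\<lambda>i. a i + b i) | a b. a \<in> A \<and> b \<in> ssum As}"

definition mprod :: "mat list \<Rightarrow> mat" where
  "mprod ss = foldr mmult ss idm"

definition swap12 :: mat where
  "swap12 = (\<lambda>i j. if (i = 0 \<and> j = 1) \<or> (i = 1 \<and> j = 0) \<or> (i = j \<and> i \<ge> 2) then 1 else 0)"

end

theory Submission
  imports Defs
begin
declare add_bit_eq_xor[simp del] mult_bit_eq_and[simp del]
lemma bit_minus[simp]: "(a::bit) - b = a + b" by simp
lemma bit_add_self[simp]: "(a::bit) + a = 0" by (cases a) simp_all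
lemma bit_add_self2[simp]: "(a::bit) + (a + b) = b" by (simp add: add.assoc[symmetric])
lemma bit_mult_eq_1[simp]: "((a::bit) * b = 1) \<longleftrightarrow> a = 1 \<and> b = 1"
  by (cases a; cases b) simp_all
lemma bit_add_eq_1[simp]: "((a::bit) + b = 1) \<longleftrightarrow> a \<noteq> b"
  by (cases a; cases b) simp_all
lemma bit_uminus[simp]: "- (a::bit) = a" by simp

definition supp :: "vec \<Rightarrow> nat set" where "supp v = {k. v k \<noteq> 0}"
definition ev :: "nat \<Rightarrow> vec" where "ev c = (\<lambda>i. if i = c then 1 else 0)"
definition dot :: "vec \<Rightarrow> vec \<Rightarrow> bit" where "dot p v = (\<Sum>k\<in>supp p. p k * v k)"
definition lfun :: "vec \<Rightarrow> mat \<Rightarrow> vec" where "lfun p M = (\<lambda>l. \<Sum>k\<in>supp p. p k * M k l)"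
definition tv :: "vec \<Rightarrow> vec \<Rightarrow> mat" where "tv u p = (\<lambda>i l. idm i l + u i * p l)"
definition DD :: "mat \<Rightarrow> (nat \<times> nat) set" where "DD M = {(i, j). M i j \<noteq> idm i j}"

lemma finsupp_supp: "finsupp v \<longleftrightarrow> finite (supp v)" by (simp add: finsupp_def supp_def)

lemma mmult_sum:
  assumes "finite A" "\<And>k. M i k \<noteq> 0 \<Longrightarrow> N k j \<noteq> 0 \<Longrightarrow> k \<in> A"
  shows "mmult M N i j = (\<Sum>k\<in>A. M i k * N k j)"
  unfolding mmult_def
  by (rule sum.mono_neutral_left) (use assms in auto)

lemma mvmult_sum:
  assumes "finite A" "\<And>k. M i k \<noteq> 0 \<Longrightarrow> v k \<noteq> 0 \<Longrightarrow> k \<in> A"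
  shows "mvmult M v i = (\<Sum>k\<in>A. M i k * v k)"
  unfolding mvmult_def
  by (rule sum.mono_neutral_left) (use assms in auto)

lemma mvmult_supp: "finsupp v \<Longrightarrow> mvmult M v i = (\<Sum>k\<in>supp v. M i k * v k)"
  by (rule mvmult_sum) (auto simp: finsupp_supp supp_def)

lemma dot_sum: "finite A \<Longrightarrow> supp p \<subseteq> A \<Longrightarrow> dot p v = (\<Sum>k\<in>A. p k * v k)"
  unfolding dot_def by (rule sum.mono_neutral_left) (auto simp: supp_def)

lemma lfun_sum: "finite A \<Longrightarrow> supp p \<subseteq> A \<Longrightarrow> lfun p M l = (\<Sum>k\<in>A. p k * M k l)"
  unfolding lfun_def by (rule sum.mono_neutral_left) (auto simp: supp_def)

lemma finitary_DD: "finitary M \<longleftrightarrow> finite (DD M)" by (simp add: finitary_def DD_def)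

lemma fin_rs: assumes "finitary M" shows "finite {k. M i k \<noteq> 0}"
proof -
  have "{k. M i k \<noteq> 0} \<subseteq> insert i (snd ` DD M)"
  proof
    fix k assume "k \<in> {k. M i k \<noteq> 0}"
    then have "k = i \<or> (i, k) \<in> DD M" by (auto simp: DD_def idm_def)
    then show "k \<in> insert i (snd ` DD M)" by (metis insertI1 insertI2 rev_image_eqI snd_conv)
  qed
  then show ?thesis using assms by (meson finite_imageI finite_insert finite_subset finitary_DD)
qed

lemma fin_cs: assumes "finitary M" shows "finite {k. M k j \<noteq> 0}"
proof -
  have "{k. M k j \<noteq> 0} \<subseteq> insert j (fst ` DD M)"
  proof
    fix k assume "k \<in> {k. M k j \<noteq> 0}"
    then have "k = j \<or> (k, j) \<in> DD M" by (auto simp: DD_def idm_def)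
    then show "k \<in> insert j (fst ` DD M)" by (metis insertI1 insertI2 rev_image_eqI fst_conv)
  qed
  then show ?thesis using assms by (meson finite_imageI finite_insert finite_subset finitary_DD)
qed

lemma mmult_assoc:
  assumes "finitary M" "finitary P"
  shows "mmult (mmult M N) P = mmult M (mmult N P)"
proof (intro ext)
  fix i j
  let ?R = "{l. M i l \<noteq> 0}" and ?C = "{k. P k j \<noteq> 0}"
  have R: "finite ?R" and C: "finite ?C" using fin_rs[OF assms(1)] fin_cs[OF assms(2)] by auto
  have "mmult (mmult M N) P i j = (\<Sum>k\<in>?C. mmult M N i k * P k j)"
    by (rule mmult_sum[OF C]) auto
  also have "\<dots> = (\<Sum>k\<in>?C. (\<Sum>l\<in>?R. M i l * N l k) * P k j)"
    by (intro sum.cong refl arg_cong2[where f="(*)"] mmult_sum[OF R]) auto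
  also have "\<dots> = (\<Sum>l\<in>?R. M i l * (\<Sum>k\<in>?C. N l k * P k j))"
    unfolding sum_distrib_left sum_distrib_right mult.assoc by (rule sum.swap)
  also have "\<dots> = (\<Sum>l\<in>?R. M i l * mmult N P l j)"
    by (intro sum.cong refl arg_cong2[where f="(*)"] mmult_sum[OF C, symmetric]) auto
  also have "\<dots> = mmult M (mmult N P) i j"
    by (rule mmult_sum[OF R, symmetric]) auto
  finally show "mmult (mmult M N) P i j = mmult M (mmult N P) i j" .
qed

lemma mmult_idm_left[simp]: "mmult idm N = N"
proof (intro ext)
  fix i j show "mmult idm N i j = N i j"
    by (subst mmult_sum[of "{i}"]) (auto simp: idm_def split: if_splits)
qed

lemma mmult_idm_right[simp]: "mmult M idm = M"
proof (intro ext)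
  fix i j show "mmult M idm i j = M i j"
    by (subst mmult_sum[of "{j}"]) (auto simp: idm_def split: if_splits)
qed

lemma finitary_idm[simp]: "finitary idm" by (simp add: finitary_def)

lemma finitary_mmult[simp]:
  assumes "finitary M" "finitary N" shows "finitary (mmult M N)"
proof -
  have "DD (mmult M N) \<subseteq> DD M \<union> DD N \<union> (fst ` DD M \<times> snd ` DD N)"
  proof
    fix x assume x: "x \<in> DD (mmult M N)"
    obtain i j where ij: "x = (i, j)" by force
    show "x \<in> DD M \<union> DD N \<union> (fst ` DD M \<times> snd ` DD N)"
    proof (rule ccontr)
      assume nx: "x \<notin> DD M \<union> DD N \<union> (fst ` DD M \<times> snd ` DD N)"
      have "i \<notin> fst ` DD M \<or> j \<notin> snd ` DD N" using nx ij by auto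
      then show False
      proof
        assume "i \<notin> fst ` DD M"
        then have row: "\<And>k. M i k = idm i k" by (force simp: DD_def image_iff)
        have "mmult M N i j = N i j"
          by (subst mmult_sum[of "{i}"]) (auto simp: row idm_def split: if_splits)
        then show False using x nx ij by (auto simp: DD_def)
      next
        assume "j \<notin> snd ` DD N"
        then have col: "\<And>k. N k j = idm k j" by (force simp: DD_def image_iff)
        have "mmult M N i j = M i j"
          by (subst mmult_sum[of "{j}"]) (auto simp: col idm_def split: if_splits)
        then show False using x nx ij by (auto simp: DD_def)
      qed
    qed
  qed
  then show ?thesis using assms by (simp add: finitary_DD finite_subset)
qed


lemma supp_ev[simp]: "supp (ev c) = {c}" by (auto simp: supp_def ev_def)
lemma finsupp_ev[simp]: "finsupp (ev c)" by (simp add: finsupp_supp)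

lemma sum_idm_left: "finite A \<Longrightarrow> i \<in> A \<Longrightarrow> (\<Sum>k\<in>A. idm i k * f k) = f i"
proof -
  assume "finite A" "i \<in> A"
  have "(\<Sum>k\<in>A. idm i k * f k) = (\<Sum>k\<in>A. if i = k then f k else 0)"
    by (rule sum.cong) (auto simp: idm_def)
  then show ?thesis using \<open>finite A\<close> \<open>i \<in> A\<close> by simp
qed
lemma sum_idm_right: "finite A \<Longrightarrow> l \<in> A \<Longrightarrow> (\<Sum>k\<in>A. f k * idm k l) = f l"
proof -
  assume "finite A" "l \<in> A"
  have "(\<Sum>k\<in>A. f k * idm k l) = (\<Sum>k\<in>A. if l = k then f k else 0)"
    by (rule sum.cong) (auto simp: idm_def)
  then show ?thesis using \<open>finite A\<close> \<open>l \<in> A\<close> by simp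
qed

lemma tv_mult:
  assumes "finsupp p" shows "mmult (tv u p) M = (\<lambda>i l. M i l + u i * lfun p M l)"
proof (intro ext)
  fix i l
  let ?A = "insert i (supp p)"
  have A: "finite ?A" using assms by (simp add: finsupp_supp)
  have "mmult (tv u p) M i l = (\<Sum>k\<in>?A. tv u p i k * M k l)"
    by (rule mmult_sum[OF A]) (auto simp: tv_def idm_def supp_def split: if_splits)
  also have "\<dots> = (\<Sum>k\<in>?A. (idm i k + u i * p k) * M k l)" by (simp add: tv_def)
  also have "\<dots> = (\<Sum>k\<in>?A. idm i k * M k l) + u i * (\<Sum>k\<in>?A. p k * M k l)"
    by (simp add: distrib_right sum.distrib sum_distrib_left mult.assoc)
  also have "\<dots> = M i l + u i * lfun p M l"
    using A lfun_sum[OF A subset_insertI, of M l] by (simp add: sum_idm_left)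
  finally show "mmult (tv u p) M i l = M i l + u i * lfun p M l" .
qed

lemma tv_mvmult:
  assumes "finsupp p" shows "mvmult (tv u p) x = (\<lambda>i. x i + u i * dot p x)"
proof (intro ext)
  fix i
  let ?A = "insert i (supp p)"
  have A: "finite ?A" using assms by (simp add: finsupp_supp)
  have "mvmult (tv u p) x i = (\<Sum>k\<in>?A. tv u p i k * x k)"
    by (rule mvmult_sum[OF A]) (auto simp: tv_def idm_def supp_def split: if_splits)
  also have "\<dots> = (\<Sum>k\<in>?A. (idm i k + u i * p k) * x k)" by (simp add: tv_def)
  also have "\<dots> = (\<Sum>k\<in>?A. idm i k * x k) + u i * (\<Sum>k\<in>?A. p k * x k)"
    by (simp add: distrib_right sum.distrib sum_distrib_left mult.assoc)
  also have "\<dots> = x i + u i * dot p x"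
    using A dot_sum[OF A subset_insertI, of x] by (simp add: sum_idm_left)
  finally show "mvmult (tv u p) x i = x i + u i * dot p x" .
qed

lemma lfun_tv:
  assumes "finsupp p" shows "lfun p (tv u q) = (\<lambda>l. p l + dot p u * q l)"
proof (intro ext)
  fix l
  let ?A = "insert l (supp p)"
  have A: "finite ?A" using assms by (simp add: finsupp_supp)
  have "lfun p (tv u q) l = (\<Sum>k\<in>?A. p k * tv u q k l)"
    by (rule lfun_sum[OF A]) auto
  also have "\<dots> = (\<Sum>k\<in>?A. p k * (idm k l + u k * q l))" by (simp add: tv_def)
  also have "\<dots> = (\<Sum>k\<in>?A. p k * idm k l) + (\<Sum>k\<in>?A. p k * u k) * q l"
    by (simp add: distrib_left sum.distrib sum_distrib_right mult.assoc)
  also have "\<dots> = p l + dot p u * q l"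
    using A dot_sum[OF A subset_insertI, of u] by (simp add: sum_idm_right)
  finally show "lfun p (tv u q) l = p l + dot p u * q l" .
qed

lemma finitary_tv[simp]:
  assumes "finsupp u" "finsupp p" shows "finitary (tv u p)"
proof -
  have "DD (tv u p) \<subseteq> supp u \<times> supp p" by (auto simp: DD_def tv_def supp_def)
  then show ?thesis using assms by (simp add: finitary_DD finsupp_supp finite_subset)
qed

lemma tv_tv:
  assumes "finsupp p" "dot p u = 0" shows "mmult (tv u p) (tv u p) = idm"
  using assms by (simp add: tv_mult lfun_tv) (simp add: tv_def add.assoc)

lemma dot_ev: "finsupp p \<Longrightarrow> dot p (ev c) = p c"
proof -
  assume "finsupp p"
  then have A: "finite (insert c (supp p))" by (simp add: finsupp_supp)
  have "dot p (ev c) = (\<Sum>k\<in>insert c (supp p). if c = k then p k else 0)"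
    by (subst dot_sum[OF A]) (auto intro!: sum.cong simp: ev_def)
  then show ?thesis using A by simp
qed

lemma dot_ev_left: "dot (ev c) v = v c"
proof -
  have "dot (ev c) v = (\<Sum>k\<in>{c}. ev c k * v k)" unfolding dot_def by simp
  then show ?thesis by (simp add: ev_def)
qed

lemma msub_tv: "msub (tv u p) idm = (\<lambda>i l. u i * p l)"
  by (simp add: msub_def tv_def fun_eq_iff add.commute)


lemma ev_idm1: "ev c k = idm c k" by (auto simp: ev_def idm_def)
lemma ev_idm2: "ev c k = idm k c" by (auto simp: ev_def idm_def)

lemma conj_G:
  assumes h: "finitary h" "mmult h h = idm" and fs: "finsupp u" "finsupp p"
  shows "mmult (mmult h (tv u p)) h = tv (mvmult h u) (lfun p h)"
proof -
  have "mmult (mmult h (tv u p)) h = mmult h (mmult (tv u p) h)"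
    using h by (simp add: mmult_assoc)
  also have "\<dots> = mmult h (\<lambda>i l. h i l + u i * lfun p h l)" using fs by (simp add: tv_mult)
  also have "\<dots> = tv (mvmult h u) (lfun p h)"
  proof (intro ext)
    fix i l
    let ?R = "{k. h i k \<noteq> 0}"
    have R: "finite ?R" using fin_rs[OF h(1)] .
    have "mmult h (\<lambda>i l. h i l + u i * lfun p h l) i l = (\<Sum>k\<in>?R. h i k * (h k l + u k * lfun p h l))"
      by (rule mmult_sum[OF R]) auto
    also have "\<dots> = (\<Sum>k\<in>?R. h i k * h k l) + (\<Sum>k\<in>?R. h i k * u k) * lfun p h l"
      by (simp add: distrib_left sum.distrib sum_distrib_right mult.assoc)
    also have "\<dots> = mmult h h i l + mvmult h u i * lfun p h l"
      using mmult_sum[OF R, where M=h and N=h and j=l] mvmult_sum[OF R, where M=h and v=u] by simp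
    finally show "mmult h (\<lambda>i l. h i l + u i * lfun p h l) i l = tv (mvmult h u) (lfun p h) i l"
      using h(2) by (simp add: tv_def)
  qed
  finally show ?thesis .
qed

lemma GLinf_finitary: "h \<in> GLinf \<Longrightarrow> finitary h" by (simp add: GLinf_def)

lemma conj_step:
  assumes c: "conjugate_GL A B" and B: "finitary B" and h: "finitary h" "mmult h h = idm"
  shows "conjugate_GL (mmult (mmult h A) h) B"
proof -
  obtain h1 N1 where h1: "h1 \<in> GLinf" "finitary N1" "mmult h1 N1 = idm" "mmult N1 h1 = idm"
    and A: "A = mmult (mmult h1 B) N1" using c unfolding conjugate_GL_def by blast
  have fh1: "finitary h1" using h1(1) by (rule GLinf_finitary)
  note fs = fh1 h1(2) h(1) B
  have e1: "mmult (mmult h h1) (mmult N1 h) = idm"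
  proof -
    have "mmult (mmult h h1) (mmult N1 h) = mmult h (mmult (mmult h1 N1) h)"
      using fs by (simp add: mmult_assoc)
    then show ?thesis using h1(3) h(2) by simp
  qed
  have e2: "mmult (mmult N1 h) (mmult h h1) = idm"
  proof -
    have "mmult (mmult N1 h) (mmult h h1) = mmult N1 (mmult (mmult h h) h1)"
      using fs by (simp add: mmult_assoc)
    then show ?thesis using h1(4) h(2) by simp
  qed
  have GL: "mmult h h1 \<in> GLinf" unfolding GLinf_def using e1 e2 fs by (auto intro!: exI[of _ "mmult N1 h"])
  have eq: "mmult (mmult h A) h = mmult (mmult (mmult h h1) B) (mmult N1 h)"
    unfolding A using fs by (simp add: mmult_assoc)
  show ?thesis unfolding conjugate_GL_def
    using GL e1 e2 eq fs by (intro exI[of _ "mmult h h1"] exI[of _ "mmult N1 h"]) auto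
qed

definition e01 :: vec where "e01 = (\<lambda>i. if i < 2 then 1 else 0)"

lemma swap12_tv: "swap12 = tv e01 e01"
  by (auto simp: fun_eq_iff swap12_def tv_def e01_def idm_def)

lemma finsupp_e01: "finsupp e01"
proof -
  have "supp e01 \<subseteq> {..<2}" by (auto simp: supp_def e01_def split: if_splits)
  then show ?thesis by (simp add: finsupp_supp finite_subset)
qed

lemma finitary_swap12: "finitary swap12"
  using finsupp_e01 by (simp add: swap12_tv)

lemma conj_base: "conjugate_GL swap12 swap12"
  unfolding conjugate_GL_def GLinf_def
  by (intro exI[of _ idm]) auto

definition Eu :: "nat \<Rightarrow> nat \<Rightarrow> vec \<Rightarrow> vec" where "Eu a b x = (\<lambda>i. x i + ev a i * x b)"
definition Ep :: "nat \<Rightarrow> nat \<Rightarrow> vec \<Rightarrow> vec" where "Ep a b p = (\<lambda>l. p l + p a * ev b l)"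

lemma Eu_Eu: "a \<noteq> b \<Longrightarrow> Eu a b (Eu a b x) = x"
  by (simp add: Eu_def ev_def fun_eq_iff add.assoc)
lemma Ep_Ep: "a \<noteq> b \<Longrightarrow> Ep a b (Ep a b x) = x"
  by (simp add: Ep_def ev_def fun_eq_iff add.assoc)

lemma finsupp_Eu: assumes "finsupp x" shows "finsupp (Eu a b x)"
proof -
  have "supp (Eu a b x) \<subseteq> insert a (supp x)" by (auto simp: supp_def Eu_def ev_def)
  then show ?thesis using assms by (simp add: finsupp_supp finite_subset)
qed
lemma finsupp_Ep: assumes "finsupp x" shows "finsupp (Ep a b x)"
proof -
  have "supp (Ep a b x) \<subseteq> insert b (supp x)" by (auto simp: supp_def Ep_def ev_def)
  then show ?thesis using assms by (simp add: finsupp_supp finite_subset)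
qed

definition PP :: "vec \<Rightarrow> vec \<Rightarrow> bool" where "PP u p \<longleftrightarrow> conjugate_GL (tv u p) swap12"

lemma Sstep:
  assumes ab: "a \<noteq> b" and fs: "finsupp u" "finsupp p" and P: "PP (Eu a b u) (Ep a b p)"
  shows "PP u p"
proof -
  let ?E = "tv (ev a) (ev b)"
  have fE: "finitary ?E" by simp
  have EE: "mmult ?E ?E = idm" using ab by (intro tv_tv) (simp_all add: dot_ev_left, simp add: ev_def)
  have fs': "finsupp (Eu a b u)" "finsupp (Ep a b p)" using fs by (auto intro: finsupp_Eu finsupp_Ep)
  have "conjugate_GL (mmult (mmult ?E (tv (Eu a b u) (Ep a b p))) ?E) swap12"
    using conj_step[OF P[unfolded PP_def] finitary_swap12 fE EE] .
  also have "mmult (mmult ?E (tv (Eu a b u) (Ep a b p))) ?E = tv u p"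
    using conj_G[OF fE EE fs'] fs' ab
    by (simp add: tv_mvmult lfun_tv dot_ev_left dot_ev Eu_def[symmetric] Ep_def[symmetric] Eu_Eu Ep_Ep)
  finally show ?thesis unfolding PP_def .
qed


definition QQ :: "vec \<Rightarrow> vec \<Rightarrow> bool" where
  "QQ u p \<longleftrightarrow> finsupp u \<and> finsupp p \<and> supp u \<noteq> {} \<and> supp p \<noteq> {} \<and> dot p u = 0"

lemma sum_ev_left: "finite A \<Longrightarrow> c \<in> A \<Longrightarrow> (\<Sum>k\<in>A. ev c k * f k) = f c"
  unfolding ev_idm1 by (rule sum_idm_left)
lemma sum_ev_right: "finite A \<Longrightarrow> c \<in> A \<Longrightarrow> (\<Sum>k\<in>A. f k * ev c k) = f c"
  unfolding ev_idm2 by (rule sum_idm_right)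

lemma dot_E:
  assumes ab: "a \<noteq> b" and fs: "finsupp p" "finsupp u"
  shows "dot (Ep a b p) (Eu a b u) = dot p u"
proof -
  let ?A = "insert a (insert b (supp p))"
  have A: "finite ?A" using fs by (simp add: finsupp_supp)
  have sA: "supp (Ep a b p) \<subseteq> ?A" by (auto simp: supp_def Ep_def ev_def)
  have "dot (Ep a b p) (Eu a b u) = (\<Sum>k\<in>?A. (p k + p a * ev b k) * (u k + ev a k * u b))"
    using dot_sum[OF A sA] by (simp add: Ep_def Eu_def)
  also have "\<dots> = (\<Sum>k\<in>?A. p k * u k + (p k * ev a k) * u b + p a * (ev b k * u k)
                      + p a * u b * (ev b k * ev a k))"
    by (rule sum.cong) (simp_all add: algebra_simps)
  also have "\<dots> = (\<Sum>k\<in>?A. p k * u k) + (\<Sum>k\<in>?A. p k * ev a k) * u b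
        + p a * (\<Sum>k\<in>?A. ev b k * u k) + p a * u b * (\<Sum>k\<in>?A. ev b k * ev a k)"
    by (simp add: sum.distrib sum_distrib_left sum_distrib_right)
  also have "\<dots> = (\<Sum>k\<in>?A. p k * u k) + p a * u b + p a * u b + p a * u b * ev a b"
    using A by (simp add: sum_ev_left sum_ev_right)
  also have "\<dots> = dot p u"
    using ab dot_sum[OF A, of p u] by (simp add: ev_def subset_insertI2)
  finally show ?thesis .
qed

lemma Qstep: assumes "QQ u p" "a \<noteq> b" shows "QQ (Eu a b u) (Ep a b p)"
proof -
  have fs: "finsupp u" "finsupp p" "supp u \<noteq> {}" "supp p \<noteq> {}" "dot p u = 0"
    using assms(1) by (auto simp: QQ_def)
  have z1: "Eu a b (\<lambda>_. 0) = (\<lambda>_. 0)" by (simp add: Eu_def)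
  have z2: "Ep a b (\<lambda>_. 0) = (\<lambda>_. 0)" by (simp add: Ep_def)
  have "supp (Eu a b u) \<noteq> {}"
  proof
    assume "supp (Eu a b u) = {}"
    then have "Eu a b u = (\<lambda>_. 0)" by (auto simp: supp_def fun_eq_iff)
    then have "u = (\<lambda>_. 0)" using Eu_Eu[OF assms(2), of u] z1 by simp
    then show False using fs(3) by (simp add: supp_def)
  qed
  moreover have "supp (Ep a b p) \<noteq> {}"
  proof
    assume "supp (Ep a b p) = {}"
    then have "Ep a b p = (\<lambda>_. 0)" by (auto simp: supp_def fun_eq_iff)
    then have "p = (\<lambda>_. 0)" using Ep_Ep[OF assms(2), of p] z2 by simp
    then show False using fs(4) by (simp add: supp_def)
  qed
  ultimately show ?thesis using fs dot_E[OF assms(2) fs(2,1)]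
    by (simp add: QQ_def finsupp_Eu finsupp_Ep)
qed

lemma supp_single: assumes "supp x = {c}" shows "x = ev c"
proof (rule ext)
  fix i
  have "i \<in> supp x \<longleftrightarrow> i = c" using assms by simp
  then show "x i = ev c i" by (cases "i = c") (auto simp: supp_def ev_def)
qed

lemma supp_remove: "d \<in> supp x \<Longrightarrow> supp (\<lambda>i. x i + ev d i) = supp x - {d}"
  by (auto simp: supp_def ev_def)

lemma two_elems: assumes "S \<noteq> {}" "card S \<noteq> 1" shows "\<exists>c d. c \<in> S \<and> d \<in> S \<and> c \<noteq> d"
proof -
  obtain c where c: "c \<in> S" using assms(1) by blast
  have "S \<noteq> {c}" using assms(2) by auto
  then obtain d where "d \<in> S" "d \<noteq> c" using c by blast
  then show ?thesis using c by blast
qed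

lemma L3: "PP (ev 0) (ev 1)"
proof (rule Sstep[of 1 0])
  have "Eu 1 0 (ev 0) = e01" "Ep 1 0 (ev 1) = e01"
    by (auto simp: Eu_def Ep_def ev_def e01_def fun_eq_iff)
  then show "PP (Eu 1 0 (ev 0)) (Ep 1 0 (ev 1))"
    using conj_base by (simp add: PP_def swap12_tv)
qed auto

lemma L2: "\<forall>p. card (supp p) = n \<longrightarrow> QQ (ev 0) p \<longrightarrow> PP (ev 0) p"
proof (induction n rule: less_induct)
  case (less n)
  show ?case
  proof (intro allI impI)
    fix p assume n: "card (supp p) = n" and Q: "QQ (ev 0) p"
    have fin: "finite (supp p)" and ne: "supp p \<noteq> {}" and fp: "finsupp p"
      using Q by (auto simp: QQ_def finsupp_supp)
    have p0: "p 0 = 0" using Q dot_ev[OF fp, of 0] by (simp add: QQ_def)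
    show "PP (ev 0) p"
    proof (cases "card (supp p) = 1")
      case True
      then obtain c where sc: "supp p = {c}" by (auto simp: card_Suc_eq)
      then have pc: "p = ev c" by (rule supp_single)
      have c0: "c \<noteq> 0" using p0 pc by (auto simp: ev_def split: if_splits)
      show ?thesis
      proof (cases "c = 1")
        case True then show ?thesis using pc L3 by simp
      next
        case False
        let ?q = "\<lambda>l. ev c l + ev 1 l"
        have "PP (ev 0) ?q"
        proof (rule Sstep[of 1 c])
          have "Eu 1 c (ev 0) = ev 0" "Ep 1 c ?q = ev 1"
            using c0 False by (auto simp: Eu_def Ep_def ev_def fun_eq_iff)
          then show "PP (Eu 1 c (ev 0)) (Ep 1 c ?q)" using L3 by simp
          have "supp ?q \<subseteq> {c, 1}" by (auto simp: supp_def ev_def)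
          then show "finsupp ?q" by (simp add: finsupp_supp finite_subset)
        qed (use False in auto)
        then show ?thesis
        proof -
          assume q: "PP (ev 0) ?q"
          show ?thesis unfolding pc
          proof (rule Sstep[of c 1])
            have "Eu c 1 (ev 0) = ev 0" "Ep c 1 (ev c) = ?q"
              using c0 False by (auto simp: Eu_def Ep_def ev_def fun_eq_iff)
            then show "PP (Eu c 1 (ev 0)) (Ep c 1 (ev c))" using q by simp
          qed (use False in auto)
        qed
      qed
    next
      case False
      then obtain c d where cd: "c \<in> supp p" "d \<in> supp p" "c \<noteq> d" using two_elems[OF ne] by blast
      have "p d \<noteq> 0" using cd(2) by (simp add: supp_def)
      then have d0: "d \<noteq> 0" using p0 by (cases "d = 0") simp_all
      have e1: "Eu c d (ev 0) = ev 0" using d0 by (auto simp: Eu_def ev_def fun_eq_iff)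
      have e2: "Ep c d p = (\<lambda>i. p i + ev d i)" using cd by (auto simp: Ep_def supp_def fun_eq_iff)
      have sp: "supp (Ep c d p) = supp p - {d}" unfolding e2 by (rule supp_remove[OF cd(2)])
      have lt: "card (supp (Ep c d p)) < n" unfolding sp using n card_Diff1_less[OF fin cd(2)] by simp
      have Q': "QQ (ev 0) (Ep c d p)" using Qstep[OF Q cd(3)] e1 by simp
      have "PP (ev 0) (Ep c d p)" using less[rule_format, OF lt refl Q'] .
      then show ?thesis using Sstep[OF cd(3) _ fp, of "ev 0"] e1 by simp
    qed
  qed
qed

lemma L1: "\<forall>u p. card (supp u) = n \<longrightarrow> QQ u p \<longrightarrow> PP u p"
proof (induction n rule: less_induct)
  case (less n)
  show ?case
  proof (intro allI impI)
    fix u p assume n: "card (supp u) = n" and Q: "QQ u p"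
    have fin: "finite (supp u)" and ne: "supp u \<noteq> {}" and fu: "finsupp u" and fp: "finsupp p"
      using Q by (auto simp: QQ_def finsupp_supp)
    show "PP u p"
    proof (cases "card (supp u) = 1")
      case True
      then obtain c where sc: "supp u = {c}" by (auto simp: card_Suc_eq)
      then have uc: "u = ev c" by (rule supp_single)
      show ?thesis
      proof (cases "c = 0")
        case True then show ?thesis using uc Q L2 by blast
      next
        case False
        let ?v = "\<lambda>i. ev c i + ev 0 i"
        have ev: "Eu 0 c (ev c) = ?v" "Eu c 0 ?v = ev 0"
          using False by (auto simp: Eu_def ev_def fun_eq_iff)
        have Q1: "QQ ?v (Ep 0 c p)" using Qstep[OF Q, of 0 c] False uc ev by simp
        have Q2: "QQ (ev 0) (Ep c 0 (Ep 0 c p))" using Qstep[OF Q1, of c 0] False ev by simp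
        have "PP (ev 0) (Ep c 0 (Ep 0 c p))" using L2 Q2 by blast
        then have "PP ?v (Ep 0 c p)" using Sstep[of c 0 ?v "Ep 0 c p"] Q1 False ev
          by (simp add: QQ_def)
        then show ?thesis using Sstep[of 0 c u p] False ev uc fu fp by simp
      qed
    next
      case False
      then obtain c d where cd: "c \<in> supp u" "d \<in> supp u" "c \<noteq> d" using two_elems[OF ne] by blast
      have e1: "Eu d c u = (\<lambda>i. u i + ev d i)" using cd by (auto simp: Eu_def supp_def fun_eq_iff)
      have sp: "supp (Eu d c u) = supp u - {d}" unfolding e1 by (rule supp_remove[OF cd(2)])
      have lt: "card (supp (Eu d c u)) < n" unfolding sp using n card_Diff1_less[OF fin cd(2)] by simp
      have Q': "QQ (Eu d c u) (Ep d c p)" using Qstep[OF Q] cd(3) by simp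
      have "PP (Eu d c u) (Ep d c p)" using less[rule_format, OF lt refl Q'] .
      then show ?thesis using Sstep[of d c u p] cd(3) fu fp by simp
    qed
  qed
qed

lemma QQ_PP: "QQ u p \<Longrightarrow> PP u p" using L1 by blast


definition colset :: "mat \<Rightarrow> nat set" where "colset g = {j. \<exists>i. g i j \<noteq> idm i j}"

lemma finite_colset: assumes "finitary g" shows "finite (colset g)"
proof -
  have "colset g \<subseteq> snd ` DD g"
  proof
    fix j assume "j \<in> colset g"
    then obtain i where "(i, j) \<in> DD g" by (auto simp: colset_def DD_def)
    then show "j \<in> snd ` DD g" by (metis rev_image_eqI snd_conv)
  qed
  then show ?thesis using assms by (simp add: finitary_DD finite_subset)
qed

lemma mvmult_zero: "mvmult M (\<lambda>_. 0) = (\<lambda>_. 0)"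
  by (simp add: mvmult_def fun_eq_iff)

lemma finsupp_zero: "finsupp (\<lambda>_. 0)" by (simp add: finsupp_def)

lemma zero_in_rng: "(\<lambda>_. 0) \<in> rng M"
  unfolding rng_def using mvmult_zero finsupp_zero by (metis (mono_tags, lifting) mem_Collect_eq)

lemma finsupp_add: assumes "finsupp v" "finsupp x" shows "finsupp (\<lambda>k. v k + x k)"
proof -
  have "supp (\<lambda>k. v k + x k) \<subseteq> supp v \<union> supp x" by (auto simp: supp_def)
  then show ?thesis using assms by (simp add: finsupp_supp finite_subset)
qed

lemma lin_add:
  assumes "finsupp v" "finsupp x"
  shows "mvmult M (\<lambda>k. v k + x k) = (\<lambda>i. mvmult M v i + mvmult M x i)"
proof (intro ext)
  fix i
  let ?A = "supp v \<union> supp x"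
  have A: "finite ?A" using assms by (simp add: finsupp_supp)
  have "mvmult M (\<lambda>k. v k + x k) i = (\<Sum>k\<in>?A. M i k * (v k + x k))"
    by (rule mvmult_sum[OF A]) (auto simp: supp_def)
  also have "\<dots> = (\<Sum>k\<in>?A. M i k * v k) + (\<Sum>k\<in>?A. M i k * x k)"
    by (simp add: distrib_left sum.distrib)
  also have "\<dots> = mvmult M v i + mvmult M x i"
    using mvmult_sum[OF A, of M i v] mvmult_sum[OF A, of M i x] by (auto simp: supp_def)
  finally show "mvmult M (\<lambda>k. v k + x k) i = mvmult M v i + mvmult M x i" .
qed

lemma rng_add: assumes "a \<in> rng M" "b \<in> rng M" shows "(\<lambda>i. a i + b i) \<in> rng M"
proof -
  obtain v x where v: "finsupp v" "a = mvmult M v" and x: "finsupp x" "b = mvmult M x"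
    using assms by (auto simp: rng_def)
  have "(\<lambda>i. a i + b i) = mvmult M (\<lambda>k. v k + x k)" using lin_add[OF v(1) x(1)] v x by simp
  then show ?thesis unfolding rng_def using finsupp_add[OF v(1) x(1)] by blast
qed

lemma lin_ev:
  assumes "finsupp v"
  shows "mvmult M (\<lambda>k. v k + c * ev j k) = (\<lambda>i. mvmult M v i + c * M i j)"
proof -
  have "mvmult M (\<lambda>k. c * ev j k) = (\<lambda>i. c * M i j)"
  proof (intro ext)
    fix i
    have "mvmult M (\<lambda>k. c * ev j k) i = (\<Sum>k\<in>{j}. M i k * (c * ev j k))"
      by (rule mvmult_sum) (auto simp: ev_def split: if_splits)
    then show "mvmult M (\<lambda>k. c * ev j k) i = c * M i j" by (simp add: ev_def)
  qed
  moreover have "finsupp (\<lambda>k. c * ev j k)"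
  proof -
    have "supp (\<lambda>k. c * ev j k) \<subseteq> {j}" by (auto simp: supp_def ev_def split: if_splits)
    then show ?thesis by (simp add: finsupp_supp finite_subset)
  qed
  ultimately show ?thesis using lin_add[OF assms] by simp
qed

lemma formF:
  assumes "finsupp p" "finsupp v"
  shows "\<exists>c. mvmult (msub (mmult (tv u p) G) idm) v = (\<lambda>i. mvmult (msub G idm) v i + u i * c)"
proof -
  let ?c = "\<Sum>l\<in>supp v. lfun p G l * v l"
  have "mvmult (msub (mmult (tv u p) G) idm) v = (\<lambda>i. mvmult (msub G idm) v i + u i * ?c)"
  proof (intro ext)
    fix i
    have "mvmult (msub (mmult (tv u p) G) idm) v i
        = (\<Sum>l\<in>supp v. (G i l + u i * lfun p G l + idm i l) * v l)"
      using assms by (simp add: mvmult_supp tv_mult msub_def)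
    also have "\<dots> = (\<Sum>l\<in>supp v. (G i l + idm i l) * v l) + u i * ?c"
      by (simp add: algebra_simps sum.distrib sum_distrib_left)
    also have "\<dots> = mvmult (msub G idm) v i + u i * ?c"
      using assms by (simp add: mvmult_supp msub_def)
    finally show "mvmult (msub (mmult (tv u p) G) idm) v i = mvmult (msub G idm) v i + u i * ?c" .
  qed
  then show ?thesis by blast
qed

lemma rng_step:
  assumes fp: "finsupp p" and w: "w = (\<lambda>i. g i j - idm i j)"
  shows "rng (msub (mmult (tv w p) g) idm) \<subseteq> rng (msub g idm)"
proof
  fix x assume "x \<in> rng (msub (mmult (tv w p) g) idm)"
  then obtain v where v: "finsupp v" "x = mvmult (msub (mmult (tv w p) g) idm) v"
    by (auto simp: rng_def)
  obtain c where c: "x = (\<lambda>i. mvmult (msub g idm) v i + w i * c)" using formF[OF fp v(1)] v(2) by blast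
  have "x = mvmult (msub g idm) (\<lambda>k. v k + c * ev j k)"
    unfolding c lin_ev[OF v(1)] w by (simp add: msub_def mult.commute)
  moreover have "finsupp (\<lambda>k. v k + c * ev j k)"
  proof -
    have "supp (\<lambda>k. v k + c * ev j k) \<subseteq> insert j (supp v)" by (auto simp: supp_def ev_def)
    then show ?thesis using v(1) by (simp add: finsupp_supp finite_subset)
  qed
  ultimately show "x \<in> rng (msub g idm)" by (auto simp: rng_def)
qed

lemma exists_k:
  assumes fg: "finitary g" and N: "mmult N g = idm" and j: "j \<in> colset g" and gjj: "g j j = 0"
  shows "\<exists>k\<in>colset g. k \<noteq> j \<and> g k j = 1"
proof (rule ccontr)
  assume H: "\<not> ?thesis"
  let ?K = "{k. g k j \<noteq> 0}"
  have K: "finite ?K" by (rule fin_cs[OF fg])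
  have Nz: "N j k = 0" if k: "k \<in> ?K" for k
  proof -
    have kj: "k \<noteq> j" using k gjj by auto
    have "k \<notin> colset g" using H k kj by auto
    then have col: "\<And>m. g m k = idm m k" by (auto simp: colset_def)
    have "mmult N g j k = (\<Sum>m\<in>{k}. N j m * g m k)"
      by (rule mmult_sum) (auto simp: col idm_def split: if_splits)
    then have "mmult N g j k = N j k" by (simp add: col idm_def)
    then show ?thesis using N kj by (simp add: idm_def)
  qed
  have "mmult N g j j = (\<Sum>m\<in>?K. N j m * g m j)"
    by (rule mmult_sum[OF K]) auto
  also have "\<dots> = 0" using Nz by simp
  finally show False using N by (simp add: idm_def)
qed

lemma phi_exists:
  assumes fg: "finitary g" and N: "mmult N g = idm" and j: "j \<in> colset g"
    and w: "w = (\<lambda>i. g i j - idm i j)"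
  shows "\<exists>\<phi>. finsupp \<phi> \<and> supp \<phi> \<noteq> {} \<and> dot \<phi> w = 0 \<and> lfun \<phi> g j = 1
            \<and> (\<forall>l. l \<notin> colset g \<longrightarrow> lfun \<phi> g l = 0)"
proof (cases "g j j = 1")
  case True
  have lf: "lfun (ev j) g l = g j l" for l
  proof -
    have "lfun (ev j) g l = (\<Sum>k\<in>{j}. ev j k * g k l)" unfolding lfun_def by simp
    then show ?thesis by (simp add: ev_def)
  qed
  have "lfun (ev j) g l = 0" if "l \<notin> colset g" for l
  proof -
    have "g j l = idm j l" using that by (auto simp: colset_def)
    then show ?thesis using lf that j by (auto simp: idm_def)
  qed
  moreover have "dot (ev j) w = 0" using True by (simp add: dot_ev_left w idm_def)
  ultimately show ?thesis using True lf
    by (intro exI[of _ "ev j"]) auto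
next
  case False
  then have gjj: "g j j = 0" by simp
  obtain k where k: "k \<in> colset g" "k \<noteq> j" "g k j = 1" using exists_k[OF fg N j gjj] by blast
  let ?\<phi> = "\<lambda>l. ev j l + ev k l"
  have sp: "supp ?\<phi> = {j, k}" using k by (auto simp: supp_def ev_def)
  have fp: "finsupp ?\<phi>" using sp by (simp add: finsupp_supp)
  have lf: "lfun ?\<phi> g l = g j l + g k l" for l
    using lfun_sum[of "{j,k}" ?\<phi> g l] sp k by (simp add: ev_def)
  have "lfun ?\<phi> g l = 0" if "l \<notin> colset g" for l
  proof -
    have "g j l = idm j l" "g k l = idm k l" using that by (auto simp: colset_def)
    then show ?thesis using lf that j k by (auto simp: idm_def)
  qed
  moreover have "dot ?\<phi> w = 0"
    using dot_sum[of "{j,k}" ?\<phi> w] sp k gjj by (simp add: ev_def w idm_def)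
  ultimately show ?thesis using sp fp lf gjj k
    by (intro exI[of _ ?\<phi>]) auto
qed


lemma mprod_Cons: "mprod (t # ss) = mmult t (mprod ss)" by (simp add: mprod_def)
lemma mprod_Nil: "mprod [] = idm" by (simp add: mprod_def)

lemma main:
  "\<forall>g. card (colset g) = n \<longrightarrow> finitary g \<longrightarrow> (\<exists>N. finitary N \<and> mmult N g = idm) \<longrightarrow>
     (\<exists>ss. (\<forall>s\<in>set ss. \<exists>u p. s = tv u p \<and> QQ u p \<and> u \<in> rng (msub g idm)) \<and> mprod ss = g)"
proof (induction n rule: less_induct)
  case (less n)
  show ?case
  proof (intro allI impI)
    fix g assume n: "card (colset g) = n" and fg: "finitary g"
      and "\<exists>N. finitary N \<and> mmult N g = idm"
    then obtain N where fN: "finitary N" and N: "mmult N g = idm" by blast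
    have fc: "finite (colset g)" by (rule finite_colset[OF fg])
    show "\<exists>ss. (\<forall>s\<in>set ss. \<exists>u p. s = tv u p \<and> QQ u p \<and> u \<in> rng (msub g idm)) \<and> mprod ss = g"
    proof (cases "colset g = {}")
      case True
      then have "g = idm" by (auto simp: colset_def fun_eq_iff)
      then show ?thesis by (intro exI[of _ "[]"]) (simp add: mprod_Nil)
    next
      case False
      then obtain j where j: "j \<in> colset g" by blast
      define w where "w = (\<lambda>i. g i j - idm i j)"
      have fw: "finsupp w"
      proof -
        have "supp w \<subseteq> fst ` DD g"
        proof
          fix i assume "i \<in> supp w"
          then have "(i, j) \<in> DD g" by (auto simp: supp_def w_def DD_def)
          then show "i \<in> fst ` DD g" by (metis rev_image_eqI fst_conv)
        qed
        then show ?thesis using fg by (simp add: finsupp_supp finitary_DD finite_subset)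
      qed
      have wne: "supp w \<noteq> {}" using j by (auto simp: colset_def supp_def w_def)
      have wrng: "w \<in> rng (msub g idm)"
      proof -
        have "mvmult (msub g idm) (ev j) = w"
        proof (intro ext)
          fix i
          have "mvmult (msub g idm) (ev j) i = (\<Sum>k\<in>{j}. msub g idm i k * ev j k)"
            by (simp add: mvmult_supp)
          then show "mvmult (msub g idm) (ev j) i = w i" by (simp add: ev_def msub_def w_def)
        qed
        then show ?thesis unfolding rng_def using finsupp_ev by blast
      qed
      obtain \<phi> where \<phi>: "finsupp \<phi>" "supp \<phi> \<noteq> {}" "dot \<phi> w = 0" "lfun \<phi> g j = 1"
        "\<And>l. l \<notin> colset g \<Longrightarrow> lfun \<phi> g l = 0"
        using phi_exists[OF fg N j w_def] by blast
      define t where "t = tv w \<phi>"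
      have ft: "finitary t" using fw \<phi>(1) by (simp add: t_def)
      have tt: "mmult t t = idm" using \<phi> by (simp add: t_def tv_tv)
      define g' where "g' = mmult t g"
      have g'eq: "g' = (\<lambda>i l. g i l + w i * lfun \<phi> g l)" using \<phi>(1) by (simp add: g'_def t_def tv_mult)
      have sub: "colset g' \<subseteq> colset g - {j}"
      proof
        fix l assume l: "l \<in> colset g'"
        show "l \<in> colset g - {j}"
        proof (rule ccontr)
          assume "l \<notin> colset g - {j}"
          then have "l \<notin> colset g \<or> l = j" by blast
          then have "\<forall>i. g' i l = idm i l"
          proof
            assume "l \<notin> colset g"
            then show ?thesis using \<phi>(5) by (auto simp: g'eq colset_def)
          next
            assume "l = j"
            then show ?thesis using \<phi>(4) by (simp add: g'eq w_def)
          qed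
          then show False using l by (auto simp: colset_def)
        qed
      qed
      have lt: "card (colset g') < n"
      proof -
        have "colset g' \<subset> colset g" using sub j by blast
        from psubset_card_mono[OF fc this] show ?thesis using n by simp
      qed
      have fg': "finitary g'" using ft fg by (simp add: g'_def)
      have N': "finitary (mmult N t) \<and> mmult (mmult N t) g' = idm"
      proof -
        have "mmult (mmult N t) g' = mmult N (mmult (mmult t t) g)"
          using fN ft fg by (simp add: g'_def mmult_assoc)
        then show ?thesis using tt N fN ft by simp
      qed
      obtain ss where ss: "\<forall>s\<in>set ss. \<exists>u p. s = tv u p \<and> QQ u p \<and> u \<in> rng (msub g' idm)"
        "mprod ss = g'"
        using less[rule_format, OF lt refl fg'] N' by blast
      have rs: "rng (msub g' idm) \<subseteq> rng (msub g idm)"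
        unfolding g'_def t_def by (rule rng_step[where g=g and j=j, OF \<phi>(1) w_def])
      have "mprod (t # ss) = g"
      proof -
        have "mprod (t # ss) = mmult t (mmult t g)" by (simp add: mprod_Cons ss(2) g'_def)
        also have "\<dots> = mmult (mmult t t) g" using ft fg by (simp add: mmult_assoc)
        finally show ?thesis using tt by simp
      qed
      moreover have "\<forall>s\<in>set (t # ss). \<exists>u p. s = tv u p \<and> QQ u p \<and> u \<in> rng (msub g idm)"
      proof
        fix s assume "s \<in> set (t # ss)"
        then have "s = t \<or> s \<in> set ss" by simp
        then show "\<exists>u p. s = tv u p \<and> QQ u p \<and> u \<in> rng (msub g idm)"
        proof
          assume "s = t"
          then show ?thesis using fw \<phi> wne wrng by (auto simp: t_def QQ_def)
        next
          assume "s \<in> set ss"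
          then show ?thesis using ss(1) rs by blast
        qed
      qed
      ultimately show ?thesis by blast
    qed
  qed
qed

lemma rng_tv_sub:
  assumes "u \<in> W" "(\<lambda>_. 0) \<in> W" "finsupp p"
  shows "rng (msub (tv u p) idm) \<subseteq> W"
proof
  fix x assume "x \<in> rng (msub (tv u p) idm)"
  then obtain v where v: "finsupp v" "x = mvmult (msub (tv u p) idm) v" by (auto simp: rng_def)
  let ?c = "\<Sum>l\<in>supp v. p l * v l"
  have "x = (\<lambda>i. u i * ?c)"
  proof
    fix i
    have "x i = (\<Sum>l\<in>supp v. u i * p l * v l)" using v by (simp add: mvmult_supp msub_tv)
    then show "x i = u i * ?c" by (simp add: sum_distrib_left mult.assoc)
  qed
  moreover have "?c = 0 \<or> ?c = 1" by (cases ?c) simp_all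
  ultimately have "x = u \<or> x = (\<lambda>_. 0)" by auto
  then show "x \<in> W" using assms by blast
qed

lemma ssum_sub: "(\<forall>A\<in>set As. A \<subseteq> rng M) \<Longrightarrow> ssum As \<subseteq> rng M"
proof (induction As)
  case Nil then show ?case using zero_in_rng by simp
next
  case (Cons A As)
  show ?case
  proof
    fix x assume "x \<in> ssum (A # As)"
    then obtain a b where ab: "x = (\<lambda>i. a i + b i)" "a \<in> A" "b \<in> ssum As" by auto
    have "a \<in> rng M" using ab(2) Cons.prems by auto
    moreover have "b \<in> rng M" using ab(3) Cons by auto
    ultimately show "x \<in> rng M" using rng_add ab(1) by blast
  qed
qed

lemma ssum_sup:
  "(\<forall>s\<in>set ss. \<exists>u p. s = tv u p \<and> finsupp p \<and> supp p \<noteq> {}) \<Longrightarrow>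
   rng (msub (mprod ss) idm) \<subseteq> ssum (map (\<lambda>si. rng (msub si idm)) ss)"
proof (induction ss)
  case Nil
  have "rng (msub idm idm) \<subseteq> {\<lambda>i. 0}"
    by (auto simp: rng_def msub_def mvmult_def)
  then show ?case by (simp add: mprod_Nil)
next
  case (Cons t ss)
  then obtain u p where t: "t = tv u p" "finsupp p" "supp p \<noteq> {}" by auto
  have IH: "rng (msub (mprod ss) idm) \<subseteq> ssum (map (\<lambda>si. rng (msub si idm)) ss)"
    using Cons by simp
  obtain q where q: "p q = 1" using t(3) by (auto simp: supp_def)
  show ?case
  proof
    fix x assume "x \<in> rng (msub (mprod (t # ss)) idm)"
    then obtain v where v: "finsupp v" "x = mvmult (msub (mmult t (mprod ss)) idm) v"
      by (auto simp: rng_def mprod_Cons)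
    obtain c where c: "x = (\<lambda>i. mvmult (msub (mprod ss) idm) v i + u i * c)"
      using formF[OF t(2) v(1)] v(2) t(1) by blast
    have b: "mvmult (msub (mprod ss) idm) v \<in> ssum (map (\<lambda>si. rng (msub si idm)) ss)"
      using IH v(1) by (auto simp: rng_def)
    have a: "(\<lambda>i. u i * c) \<in> rng (msub t idm)"
    proof -
      have "mvmult (msub t idm) (\<lambda>k. c * ev q k) = (\<lambda>i. u i * c)"
      proof (intro ext)
        fix i
        have "mvmult (msub t idm) (\<lambda>k. c * ev q k) i = (\<Sum>k\<in>{q}. msub t idm i k * (c * ev q k))"
          by (rule mvmult_sum) (auto simp: ev_def split: if_splits)
        then show "mvmult (msub t idm) (\<lambda>k. c * ev q k) i = u i * c"
          using q by (simp add: t(1) msub_tv ev_def)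
      qed
      moreover have "finsupp (\<lambda>k. c * ev q k)"
      proof -
        have "supp (\<lambda>k. c * ev q k) \<subseteq> {q}" by (auto simp: supp_def ev_def split: if_splits)
        then show ?thesis by (simp add: finsupp_supp finite_subset)
      qed
      ultimately show ?thesis unfolding rng_def by (intro CollectI exI[of _ "\<lambda>k. c * ev q k"]) simp
    qed
    have "x = (\<lambda>i. u i * c + mvmult (msub (mprod ss) idm) v i)" using c by (simp add: add.commute)
    then show "x \<in> ssum (map (\<lambda>si. rng (msub si idm)) (t # ss))" using a b
      by (simp only: list.map ssum.simps)
        (intro CollectI exI[of _ "\<lambda>i. u i * c"] exI[of _ "mvmult (msub (mprod ss) idm) v"] conjI refl)
  qed
qed

theorem lemma4p5:
  assumes "g \<in> GLinf" and "g \<noteq> idm"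
  shows "\<exists>ss :: mat list.
           (\<forall>si \<in> set ss. si \<in> GLinf \<and> conjugate_GL si swap12)
         \<and> mprod ss = g
         \<and> ssum (map (\<lambda>si. rng (msub si idm)) ss) = rng (msub g idm)"
proof -
  obtain N where fg: "finitary g" and fN: "finitary N" and N: "mmult N g = idm"
    using assms(1) by (auto simp: GLinf_def)
  obtain ss where ss: "\<forall>s\<in>set ss. \<exists>u p. s = tv u p \<and> QQ u p \<and> u \<in> rng (msub g idm)"
    "mprod ss = g"
    using main[rule_format, OF refl fg] fN N by blast
  have A: "\<forall>si \<in> set ss. si \<in> GLinf \<and> conjugate_GL si swap12"
  proof
    fix si assume "si \<in> set ss"
    then obtain u p where s: "si = tv u p" "QQ u p" using ss(1) by blast
    have fs: "finsupp u" "finsupp p" "dot p u = 0" using s(2) by (auto simp: QQ_def)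
    have "si \<in> GLinf" unfolding GLinf_def using fs tv_tv[OF fs(2,3)] s(1)
      by (auto intro!: exI[of _ si])
    moreover have "conjugate_GL si swap12" using QQ_PP[OF s(2)] s(1) by (simp add: PP_def)
    ultimately show "si \<in> GLinf \<and> conjugate_GL si swap12" ..
  qed
  have B: "ssum (map (\<lambda>si. rng (msub si idm)) ss) \<subseteq> rng (msub g idm)"
  proof (rule ssum_sub)
    show "\<forall>A\<in>set (map (\<lambda>si. rng (msub si idm)) ss). A \<subseteq> rng (msub g idm)"
    proof
      fix A assume "A \<in> set (map (\<lambda>si. rng (msub si idm)) ss)"
      then obtain si where si: "si \<in> set ss" "A = rng (msub si idm)" by auto
      then obtain u p where s: "si = tv u p" "QQ u p" "u \<in> rng (msub g idm)" using ss(1) by blast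
      show "A \<subseteq> rng (msub g idm)" unfolding si(2) s(1)
        by (rule rng_tv_sub[OF s(3) zero_in_rng]) (use s(2) in \<open>simp add: QQ_def\<close>)
    qed
  qed
  have C: "rng (msub g idm) \<subseteq> ssum (map (\<lambda>si. rng (msub si idm)) ss)"
  proof -
    have "\<forall>s\<in>set ss. \<exists>u p. s = tv u p \<and> finsupp p \<and> supp p \<noteq> {}"
      using ss(1) by (fastforce simp: QQ_def)
    from ssum_sup[OF this] show ?thesis using ss(2) by simp
  qed
  show ?thesis using A ss(2) B C by blast
qed

end
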